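(* Let $\Omega$, $\mu$, $w$, $\alpha$ and $T_{\alpha,w,\infty}$ be as in the context, let $N\in\mathbb N$, and let $F\subseteq\Omega$ be a Borel set with $0<\mu(F)<\infty$ such that $$\inf\Big\{\prod_{k=1}^n(w\circ\alpha^{-k})(t):\ n\geq N,\ t\in F\Big\}\neq0.$$ Then the set $\{f\in L^\infty(\Omega,\mu):\ \|T^n_{\alpha,w,\infty}f\|_\infty\geq1\ \text{ for all } n\geq N\}$ is not $\sigma$-porous in $L^\infty(\Omega,\mu)$. In particular, the set of all non-hypercyclic vectors of the operator $T_{\alpha,w,\infty}$ is not $\sigma$-porous.
   Context: $\Omega$ is a locally compact Hausdorff space with a nonnegative Radon measure $\mu$; $w:\Omega\to(0,\infty)$ is a bounded measurable function; $\alpha:\Omega\to\Omega$ is a bijective bi-measurable map such that $\|f\circ\alpha\|_\infty=\|f\circ\alpha^{-1}\|_\infty=\|f\|_\infty$ for all $f\in L^\infty(\Omega,\mu)$. Here $\alpha^{-1}$ is the inverse map, $\alpha^{-k}:=(\alpha^{-1})^k$, $\alpha^k$ is the $k$-fold iterate. $T_{\alpha,w,\infty}:L^\infty(\Omega,\mu)\to L^\infty(\Omega,\mu)$ is $T_{\alpha,w,\infty}f:=w\cdot(f\circ\alpha)$. An operator $T$ on a Banach space $\mathcal X$ is hypercyclic if some $x\in\mathcal X$ (a hypercyclic vector) has dense orbit $\{T^nx:n\in\mathbb N_0\}$; non-hypercyclic vectors are those that are not hypercyclic vectors. Porosity: Let $X$ be a metric space and $0<\lambda<1$. A set $E\subseteq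 X$ is $\lambda$-porous at $x\in E$ if for each $\delta>0$ there is $y\in B(x;\delta)\setminus\{x\}$ with $B(y;\lambda\, d(x,y))\cap E=\varnothing$; $E$ is $\lambda$-porous if it is $\lambda$-porous at each of its points; $E$ is $\sigma$-$\lambda$-porous if it is a countable union of $\lambda$-porous subsets of $X$. A set is called $\sigma$-porous if it is $\sigma$-$\lambda$-porous for some $\lambda\in(0,1)$; "not $\sigma$-porous" means not $\sigma$-$\lambda$-porous for any $\lambda\in(0,1)$. *)

theory Defs
  imports "HOL-Analysis.Analysis" "HOL-Probability.Essential_Supremum"
begin

definition radon_measure :: "'a::t2_space measure \<Rightarrow> bool" where
  "radon_measure M \<longleftrightarrow>
     sets M = sets borel \<and>
     (\<forall>K. compact K \<longrightarrow> emeasure M K < \<infinity>) \<and>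
     (\<forall>E \<in> sets borel. emeasure M E = (INF U \<in> {U. open U \<and> E \<subseteq> U}. emeasure M U)) \<and>
     (\<forall>U. open U \<longrightarrow> emeasure M U = (SUP K \<in> {K. compact K \<and> K \<subseteq> U}. emeasure M K))"

definition linf_norm_fun :: "'a measure \<Rightarrow> ('a \<Rightarrow> complex) \<Rightarrow> ereal" where
  "linf_norm_fun M f = esssup M (\<lambda>x. ereal (norm (f x)))"

definition linf_class :: "'a measure \<Rightarrow> ('a \<Rightarrow> complex) \<Rightarrow> ('a \<Rightarrow> complex) set" where
  "linf_class M f = {g \<in> borel_measurable M. AE x in M. g x = f x}"

definition Linf :: "'a measure \<Rightarrow> ('a \<Rightarrow> complex) set set" where
  "Linf M = {linf_class M f | f. f \<in> borel_measurable M \<and> linf_norm_fun M f < \<infinity>}"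

definition rep :: "('a \<Rightarrow> complex) set \<Rightarrow> ('a \<Rightarrow> complex)" where
  "rep F = (SOME f. f \<in> F)"

definition linf_norm :: "'a measure \<Rightarrow> ('a \<Rightarrow> complex) set \<Rightarrow> real" where
  "linf_norm M F = real_of_ereal (linf_norm_fun M (rep F))"

definition linf_dist :: "'a measure \<Rightarrow> ('a \<Rightarrow> complex) set \<Rightarrow> ('a \<Rightarrow> complex) set \<Rightarrow> real" where
  "linf_dist M F G = real_of_ereal (linf_norm_fun M (\<lambda>x. rep F x - rep G x))"

definition wcomp_op :: "'a measure \<Rightarrow> ('a \<Rightarrow> 'a) \<Rightarrow> ('a \<Rightarrow> real) \<Rightarrow>
    ('a \<Rightarrow> complex) set \<Rightarrow> ('a \<Rightarrow> complex) set" where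
  "wcomp_op M \<alpha> w F = linf_class M (\<lambda>x. complex_of_real (w x) * rep F (\<alpha> x))"

definition porous_at :: "'b set \<Rightarrow> ('b \<Rightarrow> 'b \<Rightarrow> real) \<Rightarrow> real \<Rightarrow> 'b set \<Rightarrow> 'b \<Rightarrow> bool" where
  "porous_at X d lam E x \<longleftrightarrow>
     (\<forall>\<delta>>0. \<exists>y\<in>X. d x y < \<delta> \<and> y \<noteq> x \<and> {z \<in> X. d y z < lam * d x y} \<inter> E = {})"

definition lporous :: "'b set \<Rightarrow> ('b \<Rightarrow> 'b \<Rightarrow> real) \<Rightarrow> real \<Rightarrow> 'b set \<Rightarrow> bool" where
  "lporous X d lam E \<longleftrightarrow> E \<subseteq> X \<and> (\<forall>x\<in>E. porous_at X d lam E x)"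

definition sigma_lporous :: "'b set \<Rightarrow> ('b \<Rightarrow> 'b \<Rightarrow> real) \<Rightarrow> real \<Rightarrow> 'b set \<Rightarrow> bool" where
  "sigma_lporous X d lam E \<longleftrightarrow> (\<exists>A :: nat \<Rightarrow> 'b set. (\<forall>i. lporous X d lam (A i)) \<and> E = (\<Union>i. A i))"

definition sigma_porous :: "'b set \<Rightarrow> ('b \<Rightarrow> 'b \<Rightarrow> real) \<Rightarrow> 'b set \<Rightarrow> bool" where
  "sigma_porous X d E \<longleftrightarrow> (\<exists>lam. 0 < lam \<and> lam < 1 \<and> sigma_lporous X d lam E)"

definition hypercyclic_vector :: "'b set \<Rightarrow> ('b \<Rightarrow> 'b \<Rightarrow> real) \<Rightarrow> ('b \<Rightarrow> 'b) \<Rightarrow> 'b \<Rightarrow> bool" where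
  "hypercyclic_vector X d T x \<longleftrightarrow>
     x \<in> X \<and> (\<forall>y\<in>X. \<forall>\<epsilon>>0. \<exists>n::nat. d ((T ^^ n) x) y < \<epsilon>)"

end

theory Submission
  imports Defs
begin


lemma porous_nowhere_dense:
  assumes ms: "Metric_space X d" and lp: "lporous X d lam A" and lam: "0 < lam"
  shows "Metric_space.mtopology X d interior_of (Metric_space.mtopology X d closure_of A) = {}"
proof -
  interpret Metric_space X d by fact
  have AX: "A \<subseteq> X" and por: "\<And>x. x \<in> A \<Longrightarrow> porous_at X d lam A x" using lp by (auto simp: lporous_def)
  show ?thesis
  proof (rule ccontr)
    assume "mtopology interior_of (mtopology closure_of A) \<noteq> {}"
    then obtain z where z: "z \<in> mtopology interior_of (mtopology closure_of A)" by blast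
    have op: "openin mtopology (mtopology interior_of (mtopology closure_of A))" by (rule openin_interior_of)
    have "\<exists>r>0. mball z r \<subseteq> mtopology interior_of (mtopology closure_of A)"
      using op z unfolding openin_mtopology by (elim conjE allE impE) 
    then obtain s where s: "s > 0" "mball z s \<subseteq> mtopology interior_of (mtopology closure_of A)"
      by (elim exE conjE)
    have sub: "mball z s \<subseteq> mtopology closure_of A" using s(2) interior_of_subset by (rule subset_trans)
    have zX: "z \<in> X" using z interior_of_subset_topspace[of mtopology] by auto
    have "z \<in> mball z s" using zX s(1) by simp
    then have zc: "z \<in> mtopology closure_of A" using sub by blast
    have h: "\<forall>r>0. \<exists>y\<in>A. y \<in> mball z r" using zc unfolding metric_closure_of by blast
    have "\<exists>y\<in>A. y \<in> mball z (s/2)" using h[rule_format, of "s/2"] s by simp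
    then obtain a where a: "a \<in> A" "a \<in> mball z (s/2)" by (elim bexE)
    have aX: "a \<in> X" using a AX by auto
    have "porous_at X d lam A a" by (rule por[OF a(1)])
    then have "\<exists>y\<in>X. d a y < s/2 \<and> y \<noteq> a \<and> {z' \<in> X. d y z' < lam * d a y} \<inter> A = {}"
      unfolding porous_at_def using s by (elim allE[where x="s/2"]) simp
    then obtain y where y: "y \<in> X" "d a y < s/2" "y \<noteq> a" and hole: "{z' \<in> X. d y z' < lam * d a y} \<inter> A = {}"
      by (elim bexE conjE)
    have "d a y \<noteq> 0" using y aX by simp
    then have dpos: "d a y > 0" using nonneg[of a y] by linarith
    have "d z y \<le> d z a + d a y" using zX aX y(1) by (rule triangle)
    moreover have "d z a < s/2" using a(2) by simp
    ultimately have "d z y < s" using y(2) by linarith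
    then have "y \<in> mball z s" using zX y(1) by simp
    then have "y \<in> mtopology closure_of A" using sub by blast
    moreover have "lam * d a y > 0" using lam dpos by simp
    ultimately have "\<exists>a'\<in>A. a' \<in> mball y (lam * d a y)"
      unfolding metric_closure_of by blast
    then obtain a' where a': "a' \<in> A" "a' \<in> mball y (lam * d a y)" by (elim bexE)
    then have "a' \<in> {z' \<in> X. d y z' < lam * d a y}" by simp
    then show False using hole a'(1) by blast
  qed
qed

lemma ball_not_sigma_porous:
  assumes ms: "Metric_space X d" and comp: "Metric_space.mcomplete X d"
    and x0: "x0 \<in> X" and r: "r > 0" and sub: "Metric_space.mball X d x0 r \<subseteq> E"
  shows "\<not> sigma_porous X d E"
proof
  interpret Metric_space X d by fact
  assume "sigma_porous X d E"
  then obtain lam where lam: "0 < lam" and "sigma_lporous X d lam E"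
    unfolding sigma_porous_def by (elim exE conjE)
  define P where "P = (\<lambda>A. (\<forall>i::nat. lporous X d lam (A i)) \<and> E = (\<Union>i. A i))"
  have ex: "\<exists>A. P A" using \<open>sigma_lporous X d lam E\<close> unfolding sigma_lporous_def P_def by simp
  define A where "A = (SOME A. P A)"
  have "P A" unfolding A_def using ex by (rule someI_ex)
  then have lp: "\<And>i. lporous X d lam (A i)" and E: "E = (\<Union>i. A i)" unfolding P_def by auto
  define G where "G = range (\<lambda>i. mtopology closure_of (A i))"
  have "mtopology interior_of \<Union>G = {}"
  proof (rule metric_Baire_category_alt[OF comp])
    show "countable G" unfolding G_def by simp
    fix T assume "T \<in> G"
    then obtain i where T: "T = mtopology closure_of (A i)" unfolding G_def by blast
    have "mtopology interior_of T = {}" unfolding T by (rule porous_nowhere_dense[OF ms lp lam])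
    then show "closedin mtopology T \<and> mtopology interior_of T = {}"
      unfolding T by simp
  qed
  moreover have "mball x0 r \<subseteq> mtopology interior_of \<Union>G"
  proof (rule interior_of_maximal)
    show "mball x0 r \<subseteq> \<Union>G"
    proof
      fix x assume "x \<in> mball x0 r"
      then have "x \<in> E" using sub by blast
      then obtain i where xi: "x \<in> A i" unfolding E by blast
      have "A i \<subseteq> X" using lp[of i] unfolding lporous_def by blast
      then have "A i \<subseteq> mtopology closure_of (A i)" by (intro closure_of_subset) simp
      then show "x \<in> \<Union>G" using xi unfolding G_def by blast
    qed
  qed simp
  moreover have "x0 \<in> mball x0 r" using x0 r by simp
  ultimately show False by blast
qed




lemma nf_meas:
  assumes [measurable]: "f \<in> borel_measurable M"
  shows "(\<lambda>x. ereal (norm (f x))) \<in> borel_measurable M"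
  by measurable

lemma nf_AE_cong:
  assumes "f \<in> borel_measurable M" "g \<in> borel_measurable M" "AE x in M. f x = g x"
  shows "linf_norm_fun M f = linf_norm_fun M g"
  unfolding linf_norm_fun_def
proof (rule esssup_AE_cong)
  show "(\<lambda>x. ereal (norm (f x))) \<in> borel_measurable M" using assms(1) by (rule nf_meas)
  show "(\<lambda>x. ereal (norm (g x))) \<in> borel_measurable M" using assms(2) by (rule nf_meas)
  show "AE x in M. ereal (norm (f x)) = ereal (norm (g x))" using assms(3) by eventually_elim simp
qed

lemma nf_AE: "AE x in M. ereal (norm (f x)) \<le> linf_norm_fun M f"
  unfolding linf_norm_fun_def by (rule esssup_AE)

lemma nf_le:
  assumes "f \<in> borel_measurable M" "AE x in M. norm (f x) \<le> c"
  shows "linf_norm_fun M f \<le> ereal c"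
  unfolding linf_norm_fun_def
proof (rule esssup_I)
  show "(\<lambda>x. ereal (norm (f x))) \<in> borel_measurable M" using assms(1) by (rule nf_meas)
  show "AE x in M. ereal (norm (f x)) \<le> ereal c" using assms(2) by eventually_elim simp
qed

lemma nf_nonneg:
  assumes pos: "emeasure M (space M) \<noteq> 0"
  shows "0 \<le> linf_norm_fun M f"
proof (cases "(\<lambda>x. ereal (norm (f x))) \<in> borel_measurable M")
  case True
  have "esssup M (\<lambda>x. ereal 0) \<le> esssup M (\<lambda>x. ereal (norm (f x)))"
    by (rule esssup_mono) auto
  then show ?thesis using esssup_const[OF pos, of "ereal 0"] unfolding linf_norm_fun_def zero_ereal_def
    by simp
next
  case False
  then show ?thesis unfolding linf_norm_fun_def by (simp add: esssup_non_measurable)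
qed

lemma ereal_le_real: "ereal a \<le> e \<Longrightarrow> e < \<infinity> \<Longrightarrow> a \<le> real_of_ereal e"
  by (cases e) auto

lemma real_le_of_ereal: "e \<le> ereal c \<Longrightarrow> 0 \<le> c \<Longrightarrow> real_of_ereal e \<le> c"
  by (cases e) auto

lemma nf_finite_AE:
  assumes "linf_norm_fun M f < \<infinity>"
  shows "AE x in M. norm (f x) \<le> real_of_ereal (linf_norm_fun M f)"
  using nf_AE[where M=M and f=f] by eventually_elim (rule ereal_le_real, assumption, rule assms)

lemma class_eq:
  assumes "AE x in M. f x = g x"
  shows "linf_class M f = linf_class M g"
proof -
  have 1: "(AE x in M. h x = f x) \<longleftrightarrow> (AE x in M. h x = g x)" for h
  proof
    assume "AE x in M. h x = f x" then show "AE x in M. h x = g x" using assms by eventually_elim simp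
  next
    assume "AE x in M. h x = g x" then show "AE x in M. h x = f x" using assms by eventually_elim simp
  qed
  show ?thesis unfolding linf_class_def using 1 by blast
qed

lemma rep_class:
  assumes "f \<in> borel_measurable M"
  shows "rep (linf_class M f) \<in> borel_measurable M" "AE x in M. rep (linf_class M f) x = f x"
proof -
  have "f \<in> linf_class M f" using assms unfolding linf_class_def by simp
  then have "rep (linf_class M f) \<in> linf_class M f" unfolding rep_def by (rule someI[of "\<lambda>g. g \<in> linf_class M f" f])
  then show "rep (linf_class M f) \<in> borel_measurable M" "AE x in M. rep (linf_class M f) x = f x"
    unfolding linf_class_def by auto
qed

lemma LinfD:
  assumes "F \<in> Linf M"
  shows "rep F \<in> borel_measurable M" "linf_norm_fun M (rep F) < \<infinity>" "F = linf_class M (rep F)"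
    "AE x in M. norm (rep F x) \<le> real_of_ereal (linf_norm_fun M (rep F))"
proof -
  obtain f where f: "f \<in> borel_measurable M" "linf_norm_fun M f < \<infinity>" "F = linf_class M f"
    using assms unfolding Linf_def by blast
  show rm: "rep F \<in> borel_measurable M" using rep_class(1)[OF f(1)] f(3) by simp
  have ae: "AE x in M. rep F x = f x" using rep_class(2)[OF f(1)] f(3) by simp
  have "linf_norm_fun M (rep F) = linf_norm_fun M f" by (rule nf_AE_cong[OF rm f(1) ae])
  then show fin: "linf_norm_fun M (rep F) < \<infinity>" using f(2) by simp
  show "F = linf_class M (rep F)" using class_eq[OF ae] f(3) by simp
  show "AE x in M. norm (rep F x) \<le> real_of_ereal (linf_norm_fun M (rep F))"
    by (rule nf_finite_AE[OF fin])
qed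

lemma LinfI:
  assumes "f \<in> borel_measurable M" "AE x in M. norm (f x) \<le> c"
  shows "linf_class M f \<in> Linf M"
proof -
  have "linf_norm_fun M f \<le> ereal c" by (rule nf_le[OF assms])
  then have "linf_norm_fun M f < \<infinity>" using order_le_less_trans by fastforce
  then show ?thesis unfolding Linf_def using assms(1) by blast
qed

lemma dist_AE:
  assumes "F \<in> Linf M" "G \<in> Linf M"
  shows "AE x in M. norm (rep F x - rep G x) \<le> linf_dist M F G"
proof -
  have m: "(\<lambda>x. rep F x - rep G x) \<in> borel_measurable M"
    using LinfD(1)[OF assms(1)] LinfD(1)[OF assms(2)] by (rule borel_measurable_diff)
  have "AE x in M. norm (rep F x - rep G x) \<le>
      real_of_ereal (linf_norm_fun M (rep F)) + real_of_ereal (linf_norm_fun M (rep G))"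
    using LinfD(4)[OF assms(1)] LinfD(4)[OF assms(2)]
  proof eventually_elim
    case (elim x)
    then show ?case using norm_triangle_ineq4[of "rep F x" "rep G x"] by linarith
  qed
  then have "linf_norm_fun M (\<lambda>x. rep F x - rep G x) < \<infinity>"
    by (rule order_le_less_trans[OF nf_le[OF m]]) simp
  then show ?thesis unfolding linf_dist_def by (rule nf_finite_AE)
qed

lemma dist_le:
  assumes "F \<in> Linf M" "G \<in> Linf M" "AE x in M. norm (rep F x - rep G x) \<le> c" "0 \<le> c"
  shows "linf_dist M F G \<le> c"
proof -
  have m: "(\<lambda>x. rep F x - rep G x) \<in> borel_measurable M"
    using LinfD(1)[OF assms(1)] LinfD(1)[OF assms(2)] by (rule borel_measurable_diff)
  show ?thesis unfolding linf_dist_def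
    by (rule real_le_of_ereal[OF nf_le[OF m assms(3)] assms(4)])
qed

lemma dist_nonneg:
  assumes pos: "emeasure M (space M) \<noteq> 0"
  shows "0 \<le> linf_dist M F G"
  unfolding linf_dist_def by (rule real_of_ereal_pos[OF nf_nonneg[OF pos]])

lemma Linf_metric:
  assumes pos: "emeasure M (space M) \<noteq> 0"
  shows "Metric_space (Linf M) (linf_dist M)"
proof
  fix F G H
  show "0 \<le> linf_dist M F G" by (rule dist_nonneg[OF pos])
  show "linf_dist M F G = linf_dist M G F"
    unfolding linf_dist_def linf_norm_fun_def by (simp add: norm_minus_commute)
  assume F: "F \<in> Linf M" and G: "G \<in> Linf M"
  show "linf_dist M F G = 0 \<longleftrightarrow> F = G"
  proof
    assume d0: "linf_dist M F G = 0"
    have "AE x in M. rep F x = rep G x" using dist_AE[OF F G] by eventually_elim (simp add: d0)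
    then have "linf_class M (rep F) = linf_class M (rep G)" by (rule class_eq)
    then show "F = G" using LinfD(3)[OF F] LinfD(3)[OF G] by simp
  next
    assume "F = G"
    then have "linf_dist M F G \<le> 0" using dist_le[OF F G, of 0] F by simp
    then show "linf_dist M F G = 0" using dist_nonneg[OF pos, of F G] by simp
  qed
  assume H: "H \<in> Linf M"
  have "AE x in M. norm (rep F x - rep H x) \<le> linf_dist M F G + linf_dist M G H"
    using dist_AE[OF F G] dist_AE[OF G H]
  proof eventually_elim
    case (elim x)
    have "norm (rep F x - rep H x) \<le> norm (rep F x - rep G x) + norm (rep G x - rep H x)"
      using norm_triangle_ineq[of "rep F x - rep G x" "rep G x - rep H x"] by simp
    with elim show ?case by linarith
  qed
  then show "linf_dist M F H \<le> linf_dist M F G + linf_dist M G H"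
    by (rule dist_le[OF F H]) (simp add: add_nonneg_nonneg dist_nonneg[OF pos])
qed

lemma Linf_complete:
  assumes pos: "emeasure M (space M) \<noteq> 0"
  shows "Metric_space.mcomplete (Linf M) (linf_dist M)"
proof -
  interpret Metric_space "Linf M" "linf_dist M" by (rule Linf_metric[OF pos])
  show ?thesis unfolding mcomplete_def
  proof (intro allI impI)
    fix \<sigma> assume C: "MCauchy \<sigma>"
    then have \<sigma>L: "\<And>n. \<sigma> n \<in> Linf M"
      and cau: "\<And>e. e > 0 \<Longrightarrow> \<exists>K. \<forall>n n'. K \<le> n \<longrightarrow> K \<le> n' \<longrightarrow> linf_dist M (\<sigma> n) (\<sigma> n') < e"
      unfolding MCauchy_def by auto
    define f where "f n = rep (\<sigma> n)" for n
    have fm: "\<And>n. f n \<in> borel_measurable M" unfolding f_def using LinfD(1)[OF \<sigma>L] .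
    have "\<And>n m. AE x in M. norm (f n x - f m x) \<le> linf_dist M (\<sigma> n) (\<sigma> m)"
      unfolding f_def by (rule dist_AE[OF \<sigma>L \<sigma>L])
    then have AEall: "AE x in M. \<forall>n m. norm (f n x - f m x) \<le> linf_dist M (\<sigma> n) (\<sigma> m)"
      by (simp add: AE_all_countable)
    define g where "g x = lim (\<lambda>i. f i x)" for x
    have gm: "g \<in> borel_measurable M" unfolding g_def by (rule borel_measurable_lim_metric[OF fm])
    have conv: "AE x in M. (\<lambda>i. f i x) \<longlonglongrightarrow> g x"
      using AEall
    proof eventually_elim
      case (elim x)
      have "Cauchy (\<lambda>i. f i x)"
      proof (rule CauchyI)
        fix e :: real assume "e > 0"
        then obtain K where K: "\<forall>n n'. K \<le> n \<longrightarrow> K \<le> n' \<longrightarrow> linf_dist M (\<sigma> n) (\<sigma> n') < e"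
          using cau by blast
        show "\<exists>K. \<forall>m\<ge>K. \<forall>n\<ge>K. norm (f m x - f n x) < e"
        proof (intro exI[of _ K] allI impI)
          fix m n assume "K \<le> m" "K \<le> n"
          then have "linf_dist M (\<sigma> m) (\<sigma> n) < e" using K by blast
          moreover have "norm (f m x - f n x) \<le> linf_dist M (\<sigma> m) (\<sigma> n)" using elim by blast
          ultimately show "norm (f m x - f n x) < e" by linarith
        qed
      qed
      then have "convergent (\<lambda>i. f i x)" by (simp add: Cauchy_convergent_iff)
      then show ?case unfolding g_def by (simp add: convergent_LIMSEQ_iff)
    qed
    have bnd: "AE x in M. norm (f n x - g x) \<le> e"
      if K: "\<forall>n n'. K \<le> n \<longrightarrow> K \<le> n' \<longrightarrow> linf_dist M (\<sigma> n) (\<sigma> n') < e" and nK: "K \<le> n" for K n e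
      using AEall conv
    proof eventually_elim
      case (elim x)
      have "(\<lambda>m. norm (f n x - f m x)) \<longlonglongrightarrow> norm (f n x - g x)"
        using elim(2) by (intro tendsto_intros)
      moreover have "\<exists>N. \<forall>m\<ge>N. norm (f n x - f m x) \<le> e"
      proof (intro exI[of _ K] allI impI)
        fix m assume "K \<le> m"
        then have "linf_dist M (\<sigma> n) (\<sigma> m) < e" using K nK by blast
        moreover have "norm (f n x - f m x) \<le> linf_dist M (\<sigma> n) (\<sigma> m)" using elim(1) by blast
        ultimately show "norm (f n x - f m x) \<le> e" by linarith
      qed
      ultimately show ?case by (rule LIMSEQ_le_const2)
    qed
    obtain K1 where K1: "\<forall>n n'. K1 \<le> n \<longrightarrow> K1 \<le> n' \<longrightarrow> linf_dist M (\<sigma> n) (\<sigma> n') < 1"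
      using cau[of 1] by auto
    define G where "G = linf_class M g"
    have "AE x in M. norm (g x) \<le> real_of_ereal (linf_norm_fun M (f K1)) + 1"
      using bnd[OF K1 order_refl] LinfD(4)[OF \<sigma>L[of K1]] unfolding f_def[symmetric]
    proof eventually_elim
      case (elim x)
      have "norm (g x) \<le> norm (f K1 x) + norm (f K1 x - g x)"
        using norm_triangle_ineq4[of "f K1 x" "f K1 x - g x"] by simp
      then show ?case using elim by linarith
    qed
    then have GL: "G \<in> Linf M" unfolding G_def by (rule LinfI[OF gm])
    have repG: "AE x in M. rep G x = g x" unfolding G_def by (rule rep_class(2)[OF gm])
    show "\<exists>x. limitin mtopology \<sigma> x sequentially"
    proof (intro exI[of _ G])
      show "limitin mtopology \<sigma> G sequentially"
        unfolding limitin_metric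
      proof (intro conjI allI impI GL)
        fix e :: real assume e: "e > 0"
        then obtain K where K: "\<forall>n n'. K \<le> n \<longrightarrow> K \<le> n' \<longrightarrow> linf_dist M (\<sigma> n) (\<sigma> n') < e/2"
          using cau[of "e/2"] by auto
        show "\<forall>\<^sub>F n in sequentially. \<sigma> n \<in> Linf M \<and> linf_dist M (\<sigma> n) G < e"
          unfolding eventually_sequentially
        proof (intro exI[of _ K] allI impI conjI \<sigma>L)
          fix n assume nK: "K \<le> n"
          have "AE x in M. norm (rep (\<sigma> n) x - rep G x) \<le> e/2"
            using bnd[OF K nK] repG unfolding f_def by eventually_elim simp
          then have "linf_dist M (\<sigma> n) G \<le> e/2" using e by (intro dist_le[OF \<sigma>L GL]) auto
          then show "linf_dist M (\<sigma> n) G < e" using e by linarith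
        qed
      qed
    qed
  qed
qed




locale wset =
  fixes M :: "'a measure" and w :: "'a \<Rightarrow> real" and \<alpha> :: "'a \<Rightarrow> 'a" and B :: real
  assumes sp: "space M = UNIV"
  and pos: "emeasure M (space M) \<noteq> 0"
  and w_meas: "w \<in> borel_measurable M"
  and w_pos: "\<And>x. w x > 0"
  and wB: "\<And>x. w x \<le> B"
  and B1: "1 \<le> B"
  and \<alpha>_bij: "bij \<alpha>"
  and \<alpha>_meas: "\<alpha> \<in> measurable M M"
  and \<alpha>_inv_meas: "inv \<alpha> \<in> measurable M M"
  and \<alpha>_norm: "\<And>f. f \<in> borel_measurable M \<Longrightarrow> linf_norm_fun M f < \<infinity> \<Longrightarrow>
                   linf_norm_fun M (f \<circ> \<alpha>) = linf_norm_fun M f \<and>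
                   linf_norm_fun M (f \<circ> inv \<alpha>) = linf_norm_fun M f"
begin

abbreviation T where "T \<equiv> wcomp_op M \<alpha> w"

definition Pr :: "nat \<Rightarrow> 'a \<Rightarrow> real" where
  "Pr n x = (\<Prod>k=1..n. w ((inv \<alpha> ^^ k) x))"

lemma AE_comp_gen:
  assumes \<beta>: "\<And>f. f \<in> borel_measurable M \<Longrightarrow> linf_norm_fun M f < \<infinity> \<Longrightarrow>
                 linf_norm_fun M (f \<circ> \<beta>) = linf_norm_fun M f"
    and P: "AE x in M. P x"
  shows "AE x in M. P (\<beta> x)"
proof -
  obtain N where N: "{x \<in> space M. \<not> P x} \<subseteq> N" "emeasure M N = 0" "N \<in> sets M"
    using P by (rule AE_E)
  define h where "h x = complex_of_real (indicator N x)" for x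
  have [measurable]: "N \<in> sets M" by (rule N(3))
  have hm: "h \<in> borel_measurable M" unfolding h_def by measurable
  have "N \<in> null_sets M" using N(2) N(3) by (rule null_setsI)
  then have "AE x in M. x \<notin> N" by (rule AE_not_in)
  then have "AE x in M. norm (h x) \<le> 0" by eventually_elim (simp add: h_def)
  then have h0: "linf_norm_fun M h \<le> ereal 0" by (rule nf_le[OF hm])
  then have "linf_norm_fun M h < \<infinity>" by (rule order_le_less_trans) simp
  then have le0: "linf_norm_fun M (h \<circ> \<beta>) \<le> ereal 0" using \<beta>[OF hm] h0 by simp
  have "AE x in M. ereal (norm ((h \<circ> \<beta>) x)) \<le> ereal 0"
    using nf_AE[where M=M and f="h \<circ> \<beta>"] by eventually_elim (rule order_trans[OF _ le0])
  then show ?thesis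
  proof eventually_elim
    case (elim x)
    then have "\<beta> x \<notin> N" by (auto simp: h_def split: split_indicator)
    then show ?case using N(1) sp by auto
  qed
qed

lemma AE_alpha: "AE x in M. P x \<Longrightarrow> AE x in M. P (\<alpha> x)"
  by (rule AE_comp_gen) (use \<alpha>_norm in blast)

lemma nf_inv_pow:
  "h \<in> borel_measurable M \<Longrightarrow> linf_norm_fun M h < \<infinity> \<Longrightarrow>
   linf_norm_fun M (h \<circ> (inv \<alpha> ^^ n)) = linf_norm_fun M h"
proof (induction n arbitrary: h)
  case 0
  then show ?case by simp
next
  case (Suc n)
  have hm': "h \<circ> inv \<alpha> \<in> borel_measurable M" using measurable_comp[OF \<alpha>_inv_meas Suc.prems(1)] .
  have eq: "linf_norm_fun M (h \<circ> inv \<alpha>) = linf_norm_fun M h" using \<alpha>_norm[OF Suc.prems] by simp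
  have fin': "linf_norm_fun M (h \<circ> inv \<alpha>) < \<infinity>" using eq Suc.prems(2) by simp
  have "linf_norm_fun M (h \<circ> (inv \<alpha> ^^ Suc n)) = linf_norm_fun M ((h \<circ> inv \<alpha>) \<circ> (inv \<alpha> ^^ n))"
    by (simp only: funpow.simps(2) comp_assoc)
  also have "\<dots> = linf_norm_fun M (h \<circ> inv \<alpha>)" by (rule Suc.IH[OF hm' fin'])
  also have "\<dots> = linf_norm_fun M h" by (rule eq)
  finally show ?case .
qed

lemma T_Linf:
  assumes G: "G \<in> Linf M"
  shows "T G \<in> Linf M" "AE x in M. rep (T G) x = complex_of_real (w x) * rep G (\<alpha> x)"
proof -
  have Gm: "rep G \<in> borel_measurable M" by (rule LinfD(1)[OF G])
  have m1: "(\<lambda>x. rep G (\<alpha> x)) \<in> borel_measurable M"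
    using measurable_comp[OF \<alpha>_meas Gm] by (simp add: comp_def)
  note [measurable] = w_meas m1
  have m: "(\<lambda>x. complex_of_real (w x) * rep G (\<alpha> x)) \<in> borel_measurable M" by measurable
  define c where "c = real_of_ereal (linf_norm_fun M (rep G))"
  have "AE x in M. norm (rep G (\<alpha> x)) \<le> c" unfolding c_def by (rule AE_alpha[OF LinfD(4)[OF G]])
  then have "AE x in M. norm (complex_of_real (w x) * rep G (\<alpha> x)) \<le> B * c"
  proof eventually_elim
    case (elim x)
    have "w x * norm (rep G (\<alpha> x)) \<le> B * c"
      by (rule mult_mono[OF wB elim]) (use B1 in auto)
    then show ?case using w_pos[of x] by (simp add: norm_mult)
  qed
  then show "T G \<in> Linf M" unfolding wcomp_op_def by (rule LinfI[OF m])
  show "AE x in M. rep (T G) x = complex_of_real (w x) * rep G (\<alpha> x)"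
    unfolding wcomp_op_def by (rule rep_class(2)[OF m])
qed

lemma prod_shift: "(\<Prod>j<Suc n. w ((\<alpha>^^j) y)) = w y * (\<Prod>j<n. w ((\<alpha>^^j) (\<alpha> y)))"
  unfolding prod.lessThan_Suc_shift by (simp add: funpow_swap1)

lemma Tpow:
  assumes G: "G \<in> Linf M"
  shows "(T^^n) G \<in> Linf M \<and>
    (AE x in M. rep ((T^^n) G) x = complex_of_real (\<Prod>j<n. w ((\<alpha>^^j) x)) * rep G ((\<alpha>^^n) x))"
proof (induction n)
  case 0
  show ?case using G by simp
next
  case (Suc n)
  let ?H = "(T^^n) G"
  have H: "?H \<in> Linf M"
    and IH: "AE x in M. rep ?H x = complex_of_real (\<Prod>j<n. w ((\<alpha>^^j) x)) * rep G ((\<alpha>^^n) x)"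
    using Suc.IH by auto
  have TH: "T ?H \<in> Linf M" "AE x in M. rep (T ?H) x = complex_of_real (w x) * rep ?H (\<alpha> x)"
    using T_Linf[OF H] by auto
  have IHa: "AE x in M. rep ?H (\<alpha> x) =
      complex_of_real (\<Prod>j<n. w ((\<alpha>^^j) (\<alpha> x))) * rep G ((\<alpha>^^n) (\<alpha> x))"
    by (rule AE_alpha[OF IH])
  have "AE x in M. rep (T ?H) x = complex_of_real (\<Prod>j<Suc n. w ((\<alpha>^^j) x)) * rep G ((\<alpha>^^Suc n) x)"
    using TH(2) IHa
  proof eventually_elim
    case (elim x)
    have p: "(\<Prod>j<Suc n. w ((\<alpha>^^j) x)) = w x * (\<Prod>j<n. w ((\<alpha>^^j) (\<alpha> x)))" by (rule prod_shift)
    have q: "(\<alpha>^^Suc n) x = (\<alpha>^^n) (\<alpha> x)" by (simp add: funpow_swap1)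
    have "rep (T ?H) x = complex_of_real (w x) * (complex_of_real (\<Prod>j<n. w ((\<alpha>^^j) (\<alpha> x))) * rep G ((\<alpha>^^n) (\<alpha> x)))"
      using elim by simp
    also have "\<dots> = complex_of_real (w x * (\<Prod>j<n. w ((\<alpha>^^j) (\<alpha> x)))) * rep G ((\<alpha>^^n) (\<alpha> x))"
      by (simp add: mult.assoc)
    also have "\<dots> = complex_of_real (\<Prod>j<Suc n. w ((\<alpha>^^j) x)) * rep G ((\<alpha>^^Suc n) x)"
      unfolding p q by (rule refl)
    finally show ?case .
  qed
  then show ?case using TH(1) by simp
qed

lemma alpha_inv: "\<alpha> (inv \<alpha> y) = y"
  using \<alpha>_bij by (simp add: bij_is_surj surj_f_inv_f)

lemma pow_inv: "(\<alpha>^^n) ((inv \<alpha>^^n) x) = x"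
proof (induction n)
  case 0 then show ?case by simp
next
  case (Suc n)
  have i: "(inv \<alpha>^^Suc n) x = inv \<alpha> ((inv \<alpha>^^n) x)" by simp
  have j: "(\<alpha>^^Suc n) y = (\<alpha>^^n) (\<alpha> y)" for y by (simp add: funpow_swap1)
  have "(\<alpha>^^Suc n) ((inv \<alpha>^^Suc n) x) = (\<alpha>^^n) (\<alpha> (inv \<alpha> ((inv \<alpha>^^n) x)))"
    unfolding i j by (rule refl)
  then show ?case using Suc.IH by (simp only: alpha_inv)
qed

lemma prod_inv: "(\<Prod>j<n. w ((\<alpha>^^j) ((inv \<alpha>^^n) x))) = Pr n x"
proof (induction n)
  case 0 then show ?case by (simp add: Pr_def)
next
  case (Suc n)
  have a: "\<alpha> ((inv \<alpha>^^Suc n) x) = (inv \<alpha>^^n) x" by (simp add: alpha_inv)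
  have "(\<Prod>j<Suc n. w ((\<alpha>^^j) ((inv \<alpha>^^Suc n) x))) =
      w ((inv \<alpha>^^Suc n) x) * (\<Prod>j<n. w ((\<alpha>^^j) (\<alpha> ((inv \<alpha>^^Suc n) x))))"
    by (rule prod_shift)
  also have "\<dots> = w ((inv \<alpha>^^Suc n) x) * Pr n x" unfolding a Suc.IH by (rule refl)
  also have "\<dots> = Pr (Suc n) x" unfolding Pr_def by (simp only: prod.cl_ivl_Suc) simp
  finally show ?case .
qed

lemma nf_Tpow:
  assumes G: "G \<in> Linf M"
  shows "linf_norm_fun M (rep ((T^^n) G)) = linf_norm_fun M (\<lambda>x. complex_of_real (Pr n x) * rep G x)"
proof -
  define \<Phi> where "\<Phi> x = complex_of_real (\<Prod>j<n. w ((\<alpha>^^j) x)) * rep G ((\<alpha>^^n) x)" for x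
  have Gm[measurable]: "rep G \<in> borel_measurable M" by (rule LinfD(1)[OF G])
  note [measurable] = w_meas \<alpha>_meas
  have \<Phi>m: "\<Phi> \<in> borel_measurable M" unfolding \<Phi>_def by measurable
  have P: "(T^^n) G \<in> Linf M" "AE x in M. rep ((T^^n) G) x = \<Phi> x"
    using Tpow[OF G, of n] unfolding \<Phi>_def by auto
  have e1: "linf_norm_fun M (rep ((T^^n) G)) = linf_norm_fun M \<Phi>"
    by (rule nf_AE_cong[OF LinfD(1)[OF P(1)] \<Phi>m P(2)])
  have fin: "linf_norm_fun M \<Phi> < \<infinity>" using LinfD(2)[OF P(1)] e1 by simp
  have e2: "linf_norm_fun M (\<Phi> \<circ> (inv \<alpha>^^n)) = linf_norm_fun M \<Phi>" by (rule nf_inv_pow[OF \<Phi>m fin])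
  have e3: "\<Phi> \<circ> (inv \<alpha>^^n) = (\<lambda>x. complex_of_real (Pr n x) * rep G x)"
  proof
    fix x
    show "(\<Phi> \<circ> (inv \<alpha>^^n)) x = complex_of_real (Pr n x) * rep G x"
      unfolding o_apply \<Phi>_def prod_inv pow_inv by (rule refl)
  qed
  show ?thesis using e1 e2 e3 by simp
qed

lemma Pr_pos: "0 < Pr n x"
  unfolding Pr_def by (rule prod_pos) (use w_pos in auto)

lemma Pr_mono:
  assumes "n \<le> m" shows "Pr m x \<le> Pr n x * B^(m-n)"
  using assms
proof (induction m rule: dec_induct)
  case base
  then show ?case by simp
next
  case (step m)
  have "Pr (Suc m) x = Pr m x * w ((inv \<alpha>^^Suc m) x)" unfolding Pr_def by (simp only: prod.cl_ivl_Suc) simp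
  also have "\<dots> \<le> Pr m x * B" by (rule mult_left_mono[OF wB]) (use Pr_pos less_imp_le in blast)
  also have "\<dots> \<le> (Pr n x * B^(m-n)) * B" by (rule mult_right_mono[OF step.IH]) (use B1 in linarith)
  also have "\<dots> = Pr n x * B^(Suc m - n)" using step.hyps(1) by (simp add: Suc_diff_le algebra_simps)
  finally show ?case .
qed

end




lemma real_ge1: "1 \<le> e \<Longrightarrow> e < \<infinity> \<Longrightarrow> 1 \<le> real_of_ereal e"
  by (cases e) auto

context wset
begin

lemma main_loc:
  assumes FFs: "FF \<in> sets M" and FFm: "emeasure M FF \<noteq> 0" and \<delta>: "\<delta> > 0"
    and low: "\<And>n t. N \<le> n \<Longrightarrow> t \<in> FF \<Longrightarrow> \<delta> \<le> Pr n t"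
  shows "\<not> sigma_porous (Linf M) (linf_dist M)
            {f \<in> Linf M. \<forall>n\<ge>N. linf_norm M ((T ^^ n) f) \<ge> 1}
       \<and> \<not> sigma_porous (Linf M) (linf_dist M)
            {f \<in> Linf M. \<not> hypercyclic_vector (Linf M) (linf_dist M) T f}"
proof -
  interpret Metric_space "Linf M" "linf_dist M" by (rule Linf_metric[OF pos])
  have BN: "1 \<le> B^N" using B1 by (rule one_le_power)
  have BNp: "0 < B^N" using BN by linarith
  define L where "L = \<delta> / B^N"
  have Lpos: "0 < L" unfolding L_def using \<delta> BNp by simp
  have lowall: "L \<le> Pr n t" if t: "t \<in> FF" for n t
  proof -
    have "\<delta> \<le> Pr n t * B^N"
    proof (cases "N \<le> n")
      case True
      have "Pr n t * 1 \<le> Pr n t * B^N" by (rule mult_left_mono[OF BN]) (use Pr_pos less_imp_le in blast)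
      then show ?thesis using low[OF True t] by simp
    next
      case False
      then have nN: "n \<le> N" by simp
      have "\<delta> \<le> Pr N t" using low[OF order_refl t] .
      also have "\<dots> \<le> Pr n t * B^(N-n)" by (rule Pr_mono[OF nN])
      also have "\<dots> \<le> Pr n t * B^N"
        by (rule mult_left_mono[OF power_increasing]) (use B1 Pr_pos less_imp_le in auto)
      finally show ?thesis .
    qed
    then show ?thesis unfolding L_def using BNp by (simp add: pos_divide_le_eq)
  qed
  define c where "c = 1 + B^N / \<delta>"
  have c1: "L * (c - 1) = 1" unfolding c_def L_def using \<delta> BNp B1 by simp
  have cpos: "0 \<le> c - 1" unfolding c_def using \<delta> BNp by simp
  have [measurable]: "FF \<in> sets M" by (rule FFs)
  define f0f where "f0f x = complex_of_real (c * indicator FF x)" for x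
  have f0m: "f0f \<in> borel_measurable M" unfolding f0f_def by measurable
  define f0 where "f0 = linf_class M f0f"
  have "AE x in M. norm (f0f x) \<le> c" unfolding f0f_def using cpos
    by (intro AE_I2) (auto simp: indicator_def)
  then have f0L: "f0 \<in> Linf M" unfolding f0_def by (rule LinfI[OF f0m])
  have repf0: "AE x in M. rep f0 x = f0f x" unfolding f0_def by (rule rep_class(2)[OF f0m])
  have key: "1 \<le> linf_norm_fun M (rep ((T^^n) G))" if G: "G \<in> mball f0 1" for G n
  proof -
    have GL: "G \<in> Linf M" and d1: "linf_dist M f0 G < 1" using G by auto
    have Gm: "rep G \<in> borel_measurable M" by (rule LinfD(1)[OF GL])
    have big: "AE x in M. x \<in> FF \<longrightarrow> c - 1 \<le> norm (rep G x)"
      using dist_AE[OF f0L GL] repf0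
    proof eventually_elim
      case (elim x)
      show ?case
      proof
        assume xF: "x \<in> FF"
        have "norm (complex_of_real c - rep G x) < 1" using elim d1 xF by (simp add: f0f_def)
        moreover have "norm (complex_of_real c) - norm (rep G x) \<le> norm (complex_of_real c - rep G x)"
          by (rule norm_triangle_ineq2)
        moreover have "norm (complex_of_real c) = c" using cpos by simp
        ultimately show "c - 1 \<le> norm (rep G x)" by linarith
      qed
    qed
    define h where "h x = complex_of_real (Pr n x) * rep G x" for x
    have hm: "h \<in> borel_measurable M"
    proof -
      note [measurable] = Gm w_meas \<alpha>_inv_meas
      show ?thesis unfolding h_def Pr_def by measurable
    qed
    have big2: "AE x in M. x \<in> FF \<longrightarrow> 1 \<le> norm (h x)"
      using big
    proof eventually_elim
      case (elim x)
      show ?case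
      proof
        assume xF: "x \<in> FF"
        have "L * (c - 1) \<le> Pr n x * norm (rep G x)"
          by (rule mult_mono[OF lowall[OF xF] elim[rule_format, OF xF]]) (use Pr_pos less_imp_le cpos in auto)
        then show "1 \<le> norm (h x)" using c1 Pr_pos[of n x] by (simp add: h_def norm_mult)
      qed
    qed
    have "1 \<le> linf_norm_fun M h"
    proof (rule ccontr)
      assume "\<not> 1 \<le> linf_norm_fun M h"
      then have lt: "linf_norm_fun M h < 1" by simp
      have "AE x in M. x \<notin> FF"
        using nf_AE[where M=M and f=h] big2
      proof eventually_elim
        case (elim x)
        have "ereal (norm (h x)) < 1" using elim(1) lt by (rule order_le_less_trans)
        then have "norm (h x) < 1" by simp
        then show ?case using elim(2) by auto
      qed
      then have "FF \<in> null_sets M" using AE_iff_null_sets[OF FFs] by simp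
      then show False using FFm by auto
    qed
    then show ?thesis using nf_Tpow[OF GL, of n] unfolding h_def by simp
  qed
  have sub1: "mball f0 1 \<subseteq> {f \<in> Linf M. \<forall>n\<ge>N. linf_norm M ((T ^^ n) f) \<ge> 1}"
  proof
    fix G assume G: "G \<in> mball f0 1"
    then have GL: "G \<in> Linf M" by auto
    have "1 \<le> linf_norm M ((T ^^ n) G)" for n
    proof -
      have "(T^^n) G \<in> Linf M" using Tpow[OF GL] by blast
      then show ?thesis unfolding linf_norm_def by (rule real_ge1[OF key[OF G] LinfD(2)])
    qed
    then show "G \<in> {f \<in> Linf M. \<forall>n\<ge>N. linf_norm M ((T ^^ n) f) \<ge> 1}" using GL by auto
  qed
  define Z where "Z = linf_class M (\<lambda>x. 0)"
  have Zm: "(\<lambda>x. 0::complex) \<in> borel_measurable M" by simp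
  have ZL: "Z \<in> Linf M" unfolding Z_def by (rule LinfI[OF Zm, of 0]) simp
  have repZ: "AE x in M. rep Z x = 0" unfolding Z_def by (rule rep_class(2)[OF Zm])
  have sub2: "mball f0 1 \<subseteq> {f \<in> Linf M. \<not> hypercyclic_vector (Linf M) (linf_dist M) T f}"
  proof
    fix G assume G: "G \<in> mball f0 1"
    then have GL: "G \<in> Linf M" by auto
    have far: "1 \<le> linf_dist M ((T ^^ n) G) Z" for n
    proof -
      have TL: "(T^^n) G \<in> Linf M" using Tpow[OF GL] by blast
      have m1: "rep ((T^^n) G) \<in> borel_measurable M" by (rule LinfD(1)[OF TL])
      have m2: "(\<lambda>x. rep ((T^^n) G) x - rep Z x) \<in> borel_measurable M"
        using m1 LinfD(1)[OF ZL] by (rule borel_measurable_diff)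
      have "AE x in M. rep ((T^^n) G) x - rep Z x = rep ((T^^n) G) x" using repZ by eventually_elim simp
      then have "linf_norm_fun M (\<lambda>x. rep ((T^^n) G) x - rep Z x) = linf_norm_fun M (rep ((T^^n) G))"
        by (rule nf_AE_cong[OF m2 m1])
      then show ?thesis unfolding linf_dist_def using key[OF G, of n] LinfD(2)[OF TL]
        by (intro real_ge1) simp_all
    qed
    have "\<not> hypercyclic_vector (Linf M) (linf_dist M) T G"
    proof
      assume "hypercyclic_vector (Linf M) (linf_dist M) T G"
      then have hh: "\<forall>y\<in>Linf M. \<forall>\<epsilon>>0. \<exists>n. linf_dist M ((T ^^ n) G) y < \<epsilon>"
        unfolding hypercyclic_vector_def by (elim conjE)
      have "\<exists>n. linf_dist M ((T ^^ n) G) Z < 1" using spec[OF bspec[OF hh ZL], of 1] by simp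
      then obtain n where "linf_dist M ((T ^^ n) G) Z < 1" by (elim exE)
      then show False using far[of n] by linarith
    qed
    then show "G \<in> {f \<in> Linf M. \<not> hypercyclic_vector (Linf M) (linf_dist M) T f}" using GL by auto
  qed
  have ms: "Metric_space (Linf M) (linf_dist M)" by (rule Linf_metric[OF pos])
  have cm: "mcomplete" by (rule Linf_complete[OF pos])
  show ?thesis
    by (intro conjI ball_not_sigma_porous[OF ms cm f0L zero_less_one sub1]
          ball_not_sigma_porous[OF ms cm f0L zero_less_one sub2])
qed

end


theorem mainTheorem13:
  fixes M :: "'a::t2_space measure"
    and w :: "'a \<Rightarrow> real" and \<alpha> :: "'a \<Rightarrow> 'a"
    and N :: nat and F :: "'a set"
  assumes lch: "locally_compact_space (euclidean :: 'a topology)"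
    and radon: "radon_measure M"
    and w_meas: "w \<in> borel_measurable M"
    and w_pos: "\<And>x. w x > 0"
    and w_bdd: "bounded (range w)"
    and \<alpha>_bij: "bij \<alpha>"
    and \<alpha>_meas: "\<alpha> \<in> measurable M M"
    and \<alpha>_inv_meas: "inv \<alpha> \<in> measurable M M"
    and \<alpha>_norm: "\<And>f. f \<in> borel_measurable M \<Longrightarrow> linf_norm_fun M f < \<infinity> \<Longrightarrow>
                   linf_norm_fun M (f \<circ> \<alpha>) = linf_norm_fun M f \<and>
                   linf_norm_fun M (f \<circ> inv \<alpha>) = linf_norm_fun M f"
    and N_pos: "N \<ge> 1"
    and F_borel: "F \<in> sets borel"
    and F_pos: "0 < emeasure M F" and F_fin: "emeasure M F < \<infinity>"
    and inf_ne: "Inf {\<Prod>k=1..n. w ((inv \<alpha> ^^ k) t) | n t. n \<ge> N \<and> t \<in> F} \<noteq> 0"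
  shows "\<not> sigma_porous (Linf M) (linf_dist M)
            {f \<in> Linf M. \<forall>n\<ge>N. linf_norm M ((wcomp_op M \<alpha> w ^^ n) f) \<ge> 1}
       \<and> \<not> sigma_porous (Linf M) (linf_dist M)
            {f \<in> Linf M. \<not> hypercyclic_vector (Linf M) (linf_dist M) (wcomp_op M \<alpha> w) f}"
proof -
  have sets: "sets M = sets borel" using radon unfolding radon_measure_def by (elim conjE)
  have sp: "space M = UNIV" using sets_eq_imp_space_eq[OF sets] by simp
  have FFs: "F \<in> sets M" using F_borel sets by simp
  have FFm: "emeasure M F \<noteq> 0" using F_pos by simp
  have "emeasure M F \<le> emeasure M (space M)" by (rule emeasure_mono[OF _ sets.top]) (simp add: sp)
  then have pos: "emeasure M (space M) \<noteq> 0" using F_pos by auto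
  obtain a where a: "\<forall>x\<in>range w. norm x \<le> a"
    using w_bdd unfolding Elementary_Metric_Spaces.bounded_iff by blast
  define Bw where "Bw = max 1 a"
  have wB: "w x \<le> Bw" for x
  proof -
    have "norm (w x) \<le> a" using a by simp
    then show ?thesis unfolding Bw_def by simp
  qed
  have B1: "1 \<le> Bw" unfolding Bw_def by simp
  have Wl: "wset M w \<alpha> Bw"
  proof (rule wset.intro)
    show "space M = UNIV" by (rule sp)
    show "emeasure M (space M) \<noteq> 0" by (rule pos)
    show "w \<in> borel_measurable M" by (rule w_meas)
    show "\<And>x. 0 < w x" by (rule w_pos)
    show "\<And>x. w x \<le> Bw" by (rule wB)
    show "1 \<le> Bw" by (rule B1)
    show "bij \<alpha>" by (rule \<alpha>_bij)
    show "\<alpha> \<in> M \<rightarrow>\<^sub>M M" by (rule \<alpha>_meas)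
    show "inv \<alpha> \<in> M \<rightarrow>\<^sub>M M" by (rule \<alpha>_inv_meas)
    show "\<And>f. f \<in> borel_measurable M \<Longrightarrow> linf_norm_fun M f < \<infinity> \<Longrightarrow>
                   linf_norm_fun M (f \<circ> \<alpha>) = linf_norm_fun M f \<and>
                   linf_norm_fun M (f \<circ> inv \<alpha>) = linf_norm_fun M f" by (rule \<alpha>_norm)
  qed
  interpret W: wset M w \<alpha> Bw by (rule Wl)
  define S where "S = {\<Prod>k=1..n. w ((inv \<alpha> ^^ k) t) | n t. n \<ge> N \<and> t \<in> F}"
  have "F \<noteq> {}" using F_pos by auto
  then obtain t0 where t0: "t0 \<in> F" by blast
  have "(\<Prod>k=1..N. w ((inv \<alpha> ^^ k) t0)) \<in> S" unfolding S_def mem_Collect_eq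
    by (rule exI[of _ N], rule exI[of _ t0]) (simp add: t0)
  then have Sne: "S \<noteq> {}" by (rule ex_in_conv[THEN iffD1, OF exI])
  have Spos: "0 < s" if "s \<in> S" for s
    using that unfolding S_def by (auto intro!: prod_pos simp: w_pos)
  have bdd: "bdd_below S" by (rule bdd_belowI[of _ 0]) (use Spos less_imp_le in blast)
  have ge0: "0 \<le> Inf S" by (rule cInf_greatest[OF Sne]) (use Spos less_imp_le in blast)
  have "Inf S \<noteq> 0" using inf_ne unfolding S_def .
  then have \<delta>: "0 < Inf S" using ge0 by linarith
  have low: "Inf S \<le> W.Pr n t" if "N \<le> n" "t \<in> F" for n t
  proof (rule cInf_lower[OF _ bdd])
    show "W.Pr n t \<in> S" unfolding S_def W.Pr_def mem_Collect_eq
      by (rule exI[of _ n], rule exI[of _ t]) (simp add: that)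
  qed
  show ?thesis by (rule W.main_loc[OF FFs FFm \<delta> low])
qed

end
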